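(* Let $N\ge1$, $1<p<\infty$, $M>0$, $m=p'$ and $\chi=p$. For every $s\in(0,N/p)$ let $\rho_s\in\mathcal Y_M$ minimize $\mathcal F_{s,p}$ over $\mathcal Y_M$, and let $$\mathcal D_s=\frac{p^*_s-m'}{M}\|\rho_s\|_m^m.$$ Then $$\lim_{s\to0}\mathcal F_{s,p}(\rho_s)=0\qquad\text{and}\qquad\lim_{s\to0}\mathcal D_s=0.$$
   Context: Riesz kernel. $K_{s/2}(x)=c_{N,s/2}|x|^{s-N}$, where $c_{N,s}=\pi^{-N/2}2^{-2s}\Gamma(N/2-s)/\Gamma(s)$. Exponents. $p'=p/(p-1)$, $m'=m/(m-1)$, and $p^*_s=Np/(N-sp)$. Admissible class. $\mathcal Y_M=\{\rho\in L^1_+\cap L^m(\mathbb R^N):\ \int\rho=M,\ \int x\rho=0\}$. Free energy. $\displaystyle\mathcal F_{s,p}(\rho)=\frac1{m-1}\int\rho^m-\frac{\chi}{p'}\int(K_{s/2}*\rho)^{p'}$. *)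

theory Defs
  imports "HOL-Analysis.Analysis"
begin

definition riesz_const :: "nat \<Rightarrow> real \<Rightarrow> real" where
  "riesz_const N t = pi powr (- real N / 2) * 2 powr (- 2 * t) * Gamma (real N / 2 - t) / Gamma t"

definition riesz_kernel :: "real \<Rightarrow> 'a::euclidean_space \<Rightarrow> real" where
  "riesz_kernel s x = riesz_const DIM('a) (s / 2) * norm x powr (s - real DIM('a))"

definition riesz_conv :: "real \<Rightarrow> ('a::euclidean_space \<Rightarrow> real) \<Rightarrow> 'a \<Rightarrow> ennreal" where
  "riesz_conv s rho x = (\<integral>\<^sup>+ y. ennreal (riesz_kernel s (x - y) * rho y) \<partial>lborel)"

definition enn_powr :: "ennreal \<Rightarrow> real \<Rightarrow> ennreal" where
  "enn_powr v q = (if v = \<infinity> then \<infinity> else ennreal (enn2real v powr q))"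

definition conj_exp :: "real \<Rightarrow> real" where
  "conj_exp p = p / (p - 1)"

definition sobolev_exp :: "nat \<Rightarrow> real \<Rightarrow> real \<Rightarrow> real" where
  "sobolev_exp N s p = real N * p / (real N - s * p)"

definition admissible :: "real \<Rightarrow> real \<Rightarrow> ('a::euclidean_space \<Rightarrow> real) set" where
  "admissible m M = {rho. rho \<in> borel_measurable lborel \<and> (\<forall>x. 0 \<le> rho x)
      \<and> integrable lborel rho \<and> integrable lborel (\<lambda>x. rho x powr m)
      \<and> (\<integral>x. rho x \<partial>lborel) = M
      \<and> integrable lborel (\<lambda>x. rho x *\<^sub>R x) \<and> (\<integral>x. rho x *\<^sub>R x \<partial>lborel) = 0}"

text \<open>Free energy F_{s,p}, valued in the extended reals (the interaction term may be infinite).\<close>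

definition free_energy :: "real \<Rightarrow> real \<Rightarrow> real \<Rightarrow> real \<Rightarrow> ('a::euclidean_space \<Rightarrow> real) \<Rightarrow> ereal" where
  "free_energy m chi s p rho =
     ereal (1 / (m - 1) * (\<integral>x. rho x powr m \<partial>lborel))
     - ereal (chi / conj_exp p) *
       enn2ereal (\<integral>\<^sup>+ x. enn_powr (riesz_conv s rho x) (conj_exp p) \<partial>lborel)"

end

theory Submission
  imports Defs
begin

lemma young_pt:
  fixes x l m :: real
  assumes x: "0 \<le> x" and l: "0 < l" and m: "1 < m"
  shows "m * l powr (m-1) * x \<le> x powr m + (m-1) * l powr m"
proof (cases "x = 0")
  case True then show ?thesis using l m by simp
next
  case False
  with x have x': "0 < x" by simp
  have "(x powr m) powr (1/m) * (l powr m) powr ((m-1)/m) \<le> (1/m) * x powr m + ((m-1)/m) * l powr m"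
    using m x' l by (intro Youngs_inequality_0) (auto simp: field_simps)
  also have "(x powr m) powr (1/m) = x" using x' m by (simp add: powr_powr)
  also have "(l powr m) powr ((m-1)/m) = l powr (m-1)" using l m by (simp add: powr_powr)
  finally have "x * l powr (m-1) \<le> (1/m) * x powr m + ((m-1)/m) * l powr m" .
  then have "m * (x * l powr (m-1)) \<le> m * ((1/m) * x powr m + ((m-1)/m) * l powr m)"
    using m by (intro mult_left_mono) auto
  also have "m * ((1/m) * x powr m + ((m-1)/m) * l powr m) = x powr m + (m-1) * l powr m"
    using m by (simp add: field_simps)
  finally show ?thesis by (simp add: ac_simps)
qed

lemma convex_split:
  fixes a b t m :: real
  assumes a: "0 \<le> a" and b: "0 \<le> b" and t: "0 < t" "t < 1" and m: "1 < m"
  shows "(a+b) powr m \<le> t powr (1-m) * a powr m + (1-t) powr (1-m) * b powr m"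
proof -
  have t1: "1 \<le> t powr (1-m)" using t m by (smt (verit, del_insts) powr01_less_one)
  have t2: "1 \<le> (1-t) powr (1-m)" using t m by (smt (verit, del_insts) powr01_less_one)
  consider "a = 0" | "b = 0" | "0 < a \<and> 0 < b" using a b by linarith
  then show ?thesis
  proof cases
    case 1
    have "b powr m \<le> (1-t) powr (1-m) * b powr m"
      using mult_right_mono[OF t2, of "b powr m"] by simp
    then show ?thesis using 1 t by (simp add: mult_nonneg_nonneg)
  next
    case 2
    have "a powr m \<le> t powr (1-m) * a powr m"
      using mult_right_mono[OF t1, of "a powr m"] by simp
    then show ?thesis using 2 t by (simp add: mult_nonneg_nonneg)
  next
    case 3
    have "(\<lambda>x::real. x powr m) ((1 - (1-t)) *\<^sub>R (a/t) + (1-t) *\<^sub>R (b/(1-t)))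
       \<le> (1 - (1-t)) * (a/t) powr m + (1-t) * (b/(1-t)) powr m"
      using 3 t m by (intro convex_onD[OF powr_convex]) auto
    moreover have "(1 - (1-t)) *\<^sub>R (a/t) + (1-t) *\<^sub>R (b/(1-t)) = a + b" using t by simp
    moreover have "t * (a/t) powr m = t powr (1-m) * a powr m"
      using t 3 by (simp add: powr_diff powr_divide)
    moreover have "(1-t) * (b/(1-t)) powr m = (1-t) powr (1-m) * b powr m"
      using t 3 by (simp add: powr_diff powr_divide)
    ultimately show ?thesis by simp
  qed
qed

lemma enn_powr_ennreal: "0 \<le> x \<Longrightarrow> enn_powr (ennreal x) q = ennreal (x powr q)"
  by (simp add: enn_powr_def)

lemma holder_w:
  fixes w f :: "'b \<Rightarrow> real" and N :: "'b measure"
  assumes [measurable]: "w \<in> borel_measurable N" "f \<in> borel_measurable N"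
  and w0: "\<And>y. 0 \<le> w y" and f0: "\<And>y. 0 \<le> f y"
  and W: "(\<integral>\<^sup>+y. ennreal (w y) \<partial>N) = ennreal W" and Wpos: "0 < W" and m: "1 < m"
  shows "enn_powr (\<integral>\<^sup>+y. ennreal (w y * f y) \<partial>N) m
    \<le> ennreal (W powr (m-1)) * (\<integral>\<^sup>+y. ennreal (w y * f y powr m) \<partial>N)"
proof -
  define P where "P = (\<integral>\<^sup>+y. ennreal (w y * f y powr m) \<partial>N)"
  show ?thesis
  proof (cases "P = \<infinity>")
    case True
    then show ?thesis using Wpos by (simp add: P_def[symmetric] ennreal_mult_top)
  next
    case False
    then obtain P0 where P0: "P = ennreal P0" "0 \<le> P0" by (cases P) auto
    show ?thesis
    proof (cases "P0 = 0")
      case True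
      then have "AE y in N. ennreal (w y * f y powr m) = 0"
        using P0 by (subst nn_integral_0_iff_AE[symmetric]) (auto simp: P_def)
      then have "AE y in N. ennreal (w y * f y) = 0"
      proof eventually_elim
        case (elim y)
        then have "w y * f y powr m \<le> 0" by (simp add: ennreal_eq_0_iff)
        moreover have "0 \<le> w y * f y powr m" using w0[of y] by simp
        ultimately have "w y * f y powr m = 0" by linarith
        then have "w y = 0 \<or> f y = 0" by auto
        then show ?case by auto
      qed
      then have "(\<integral>\<^sup>+y. ennreal (w y * f y) \<partial>N) = 0"
        by (simp add: nn_integral_0_iff_AE)
      then show ?thesis using m by (simp add: enn_powr_def)
    next
      case False
      with P0 have P0pos: "0 < P0" by simp
      define l where "l = (P0 / W) powr (1/m)"
      have lpos: "0 < l" using P0pos Wpos by (simp add: l_def)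
      have lm: "l powr m = P0 / W" using P0pos Wpos m by (simp add: l_def powr_powr)
      have pt: "ennreal (m * l powr (m-1)) * ennreal (w y * f y)
          \<le> ennreal (w y * f y powr m) + ennreal ((m-1) * l powr m) * ennreal (w y)" for y
      proof -
        have "w y * (m * l powr (m-1) * f y) \<le> w y * (f y powr m + (m-1) * l powr m)"
          using young_pt[OF f0 lpos m] w0 by (intro mult_left_mono) auto
        then have "m * l powr (m-1) * (w y * f y) \<le> w y * f y powr m + (m-1) * l powr m * w y"
          by (simp add: algebra_simps)
        then show ?thesis using m w0[of y] f0[of y] lpos
          by (simp add: ennreal_mult'[symmetric] ennreal_plus[symmetric] mult_nonneg_nonneg del: ennreal_plus)
      qed
      have "ennreal (m * l powr (m-1)) * (\<integral>\<^sup>+y. ennreal (w y * f y) \<partial>N)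
          = (\<integral>\<^sup>+y. ennreal (m * l powr (m-1)) * ennreal (w y * f y) \<partial>N)"
        by (simp add: nn_integral_cmult)
      also have "\<dots> \<le> (\<integral>\<^sup>+y. ennreal (w y * f y powr m) + ennreal ((m-1) * l powr m) * ennreal (w y) \<partial>N)"
        by (intro nn_integral_mono pt)
      also have "\<dots> = P + ennreal ((m-1) * l powr m) * ennreal W"
        by (simp add: nn_integral_add nn_integral_cmult W P_def)
      also have "\<dots> = ennreal (m * P0)"
        using P0 m lpos Wpos by (simp add: lm ennreal_mult'[symmetric] ennreal_plus[symmetric] del: ennreal_plus) (simp add: field_simps)
      finally have I1: "ennreal (m * l powr (m-1)) * (\<integral>\<^sup>+y. ennreal (w y * f y) \<partial>N) \<le> ennreal (m * P0)" .
      have cpos: "0 < m * l powr (m-1)" using m lpos by simp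
      define I where "I = (\<integral>\<^sup>+y. ennreal (w y * f y) \<partial>N)"
      have Ifin: "I \<noteq> \<infinity>"
      proof
        assume "I = \<infinity>"
        then show False using I1 cpos lpos m by (simp add: I_def[symmetric] ennreal_mult_top top_unique)
      qed
      then obtain I00 where I00: "I = ennreal I00" "0 \<le> I00" by (cases I) auto
      have "ennreal (m * l powr (m-1) * I00) \<le> ennreal (m * P0)"
        using I1 I00 cpos by (simp add: I_def[symmetric] ennreal_mult'[symmetric])
      then have "m * l powr (m-1) * I00 \<le> m * P0" using P0 m by (simp add: ennreal_le_iff)
      then have "I00 \<le> P0 / l powr (m-1)" using cpos m lpos by (simp add: field_simps)
      then obtain I0 where I0: "I = ennreal I0" "0 \<le> I0" "I0 \<le> P0 / l powr (m-1)"
        using I00 by blast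
      have "I0 powr m \<le> (P0 / l powr (m-1)) powr m"
        using I0 m by (intro powr_mono2) auto
      also have "\<dots> = P0 powr m / (l powr m) powr (m-1)"
        using P0 lpos by (simp add: powr_divide powr_powr ac_simps)
      also have "\<dots> = W powr (m-1) * P0"
        using P0pos Wpos m by (simp add: lm powr_divide powr_diff field_simps)
      finally have "I0 powr m \<le> W powr (m-1) * P0" .
      then show ?thesis using I0 P0 Wpos
        by (simp add: I_def[symmetric] P_def[symmetric] enn_powr_ennreal ennreal_mult'[symmetric] ennreal_leI)
    qed
  qed
qed

definition radw :: "nat \<Rightarrow> real \<Rightarrow> real" where
  "radw n r = (if 0 \<le> r then real n * unit_ball_vol (real n) * r ^ (n - 1) else 0)"

lemma radw_nonneg: "0 \<le> radw n r"
  by (simp add: radw_def)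

lemma radw_meas[measurable]: "radw n \<in> borel_measurable borel"
  unfolding radw_def by measurable

lemma radw_integral:
  assumes "0 \<le> a" "0 < n"
  shows "(\<integral>\<^sup>+r. ennreal (indicator {..a} r * radw n r) \<partial>lborel) = ennreal (unit_ball_vol (real n) * a ^ n)"
proof -
  have d: "((\<lambda>r. unit_ball_vol (real n) * r ^ n) has_vector_derivative (real n * unit_ball_vol (real n) * r ^ (n - 1))) (at r within {0..a})" for r
    unfolding has_real_derivative_iff_has_vector_derivative[symmetric] by (auto intro!: derivative_eq_intros)
  have "((\<lambda>r. real n * unit_ball_vol (real n) * r ^ (n - 1)) has_integral (unit_ball_vol (real n) * a ^ n - unit_ball_vol (real n) * 0 ^ n)) {0..a}"
    using assms by (intro fundamental_theorem_of_calculus d) auto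
  then have "((\<lambda>r. real n * unit_ball_vol (real n) * r ^ (n - 1)) has_integral (unit_ball_vol (real n) * a ^ n)) {0..a}"
    using assms by (simp add: zero_power)
  then have h: "((\<lambda>r. if r \<in> {0..a} then real n * unit_ball_vol (real n) * r ^ (n - 1) else 0) has_integral (unit_ball_vol (real n) * a ^ n)) UNIV"
    by (subst has_integral_restrict_UNIV)
  have eq: "indicator {..a} r * radw n r = (if r \<in> {0..a} then real n * unit_ball_vol (real n) * r ^ (n - 1) else 0)" for r
    by (auto simp: radw_def indicator_def)
  have "(\<integral>\<^sup>+r. ennreal ((\<lambda>r. if r \<in> {0..a} then real n * unit_ball_vol (real n) * r ^ (n - 1) else 0) r) \<partial>lborel) = ennreal (unit_ball_vol (real n) * a ^ n)"
    by (rule nn_integral_has_integral_lborel[OF _ _ h]) auto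
  then show ?thesis by (simp only: eq)
qed

lemma distr_norm_lborel:
  "distr (lborel::'a::euclidean_space measure) borel norm = density lborel (\<lambda>r. ennreal (radw DIM('a) r))"
proof (rule measure_eqI_generator_eq[where E="range atMost" and \<Omega>=UNIV and A="\<lambda>i. {..real i}"])
  show "Int_stable (range (atMost :: real \<Rightarrow> real set))"
    by (auto simp: Int_stable_def)
  show "range atMost \<subseteq> Pow (UNIV::real set)" by auto
  show "sets (distr (lborel::'a measure) borel norm) = sigma_sets UNIV (range atMost)"
    by (simp add: borel_eq_atMost)
  show "sets (density lborel (\<lambda>r. ennreal (radw DIM('a) r))) = sigma_sets UNIV (range atMost)"
    by (simp add: borel_eq_atMost)
  show "range (\<lambda>i. {..real i}) \<subseteq> range atMost" by auto
  show "(\<Union>i. {..real i}) = UNIV"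
    by (auto simp: real_arch_simple)
  have em: "emeasure (distr (lborel::'a measure) borel norm) {..a} = emeasure (density lborel (\<lambda>r. ennreal (radw DIM('a) r))) {..a}" for a :: real
  proof (cases "0 \<le> a")
    case True
    have "emeasure (distr (lborel::'a measure) borel norm) {..a} = emeasure lborel (cball (0::'a) a)"
      by (subst emeasure_distr) (auto simp: cball_def intro!: arg_cong2[where f=emeasure])
    also have "\<dots> = ennreal (unit_ball_vol (DIM('a)) * a ^ DIM('a))"
      using True by (rule emeasure_cball)
    also have "\<dots> = (\<integral>\<^sup>+r. ennreal (indicator {..a} r * radw DIM('a) r) \<partial>lborel)"
      using True by (rule radw_integral[symmetric]) simp
    also have "\<dots> = emeasure (density lborel (\<lambda>r. ennreal (radw DIM('a) r))) {..a}"
      by (subst emeasure_density) (auto intro!: nn_integral_cong simp: indicator_def)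
    finally show ?thesis .
  next
    case False
    have "emeasure (distr (lborel::'a measure) borel norm) {..a} = emeasure lborel ({}::'a set)"
    proof -
      have e: "(norm -` {..a} :: 'a set) = {}"
      proof (rule ccontr)
        assume "(norm -` {..a} :: 'a set) \<noteq> {}"
        then obtain x :: 'a where "norm x \<le> a" by auto
        then show False using False norm_ge_zero[of x] by linarith
      qed
      show ?thesis by (subst emeasure_distr) (auto simp: e)
    qed
    moreover have "emeasure (density lborel (\<lambda>r. ennreal (radw DIM('a) r))) {..a} = 0"
    proof -
      have "(\<lambda>r. ennreal (radw DIM('a) r) * indicator {..a} r) = (\<lambda>_. 0)"
        using False by (auto simp: fun_eq_iff radw_def indicator_def)
      then show ?thesis by (subst emeasure_density) auto
    qed
    ultimately show ?thesis by simp
  qed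
  then show "X \<in> range atMost \<Longrightarrow> emeasure (distr (lborel::'a measure) borel norm) X = emeasure (density lborel (\<lambda>r. ennreal (radw DIM('a) r))) X" for X
    by auto
  show "emeasure (distr (lborel::'a measure) borel norm) {..real i} \<noteq> \<infinity>" for i
  proof -
    have "(norm -` {..real i} :: 'a set) = cball 0 (real i)" by (auto simp: cball_def)
    then show ?thesis by (subst emeasure_distr) (auto simp: emeasure_cball)
  qed
qed

lemma radial_nn:
  fixes f :: "real \<Rightarrow> ennreal"
  assumes [measurable]: "f \<in> borel_measurable borel"
  shows "(\<integral>\<^sup>+x. f (norm x) \<partial>(lborel::'a::euclidean_space measure)) = (\<integral>\<^sup>+r. ennreal (radw DIM('a) r) * f r \<partial>lborel)"
proof -
  have "(\<integral>\<^sup>+x. f (norm x) \<partial>(lborel::'a measure)) = (\<integral>\<^sup>+r. f r \<partial>distr (lborel::'a measure) borel norm)"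
    by (subst nn_integral_distr) auto
  also have "\<dots> = (\<integral>\<^sup>+r. ennreal (radw DIM('a) r) * f r \<partial>lborel)"
    unfolding distr_norm_lborel by (subst nn_integral_density) auto
  finally show ?thesis .
qed

lemma radw_powr:
  assumes "0 < r" "0 < n"
  shows "radw n r * r powr e = real n * unit_ball_vol (real n) * r powr (real n - 1 + e)"
  using assms by (simp add: radw_def powr_realpow[symmetric] powr_add of_nat_diff)

lemma near_integral:
  assumes R: "0 < R" and e: "- real DIM('a) < e"
  shows "(\<integral>\<^sup>+x. ennreal (if norm x \<le> R then norm x powr e else 0) \<partial>(lborel::'a::euclidean_space measure))
       = ennreal (real DIM('a) * unit_ball_vol (real DIM('a)) * R powr (real DIM('a) + e) / (real DIM('a) + e))"
proof -
  let ?N = "DIM('a)" let ?c = "real ?N * unit_ball_vol (real ?N)"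
  have c0: "0 \<le> ?c" by simp
  have "(\<integral>\<^sup>+x. ennreal (if norm x \<le> R then norm x powr e else 0) \<partial>(lborel::'a measure))
      = (\<integral>\<^sup>+r. ennreal (radw ?N r) * ennreal (if r \<le> R then r powr e else 0) \<partial>lborel)"
    by (rule radial_nn[where f="\<lambda>r. ennreal (if r \<le> R then r powr e else 0)"]) measurable
  also have "\<dots> = (\<integral>\<^sup>+r. ennreal (if r \<in> {0..R} then ?c * r powr (real ?N - 1 + e) else 0) \<partial>lborel)"
  proof (intro nn_integral_cong)
    fix r :: real
    show "ennreal (radw ?N r) * ennreal (if r \<le> R then r powr e else 0) = ennreal (if r \<in> {0..R} then ?c * r powr (real ?N - 1 + e) else 0)"
    proof (cases "0 < r")
      case True
      then show ?thesis using radw_powr[OF True, of ?N e] radw_nonneg[of ?N r]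
        by (auto simp: ennreal_mult'[symmetric])
    next
      case False
      then show ?thesis by (auto simp: radw_def)
    qed
  qed
  also have "\<dots> = ennreal (?c * (R powr (real ?N - 1 + e + 1) / (real ?N - 1 + e + 1)))"
  proof (rule nn_integral_has_integral_lborel)
    have "((\<lambda>r. r powr (real ?N - 1 + e)) has_integral (R powr (real ?N - 1 + e + 1) / (real ?N - 1 + e + 1))) {0..R}"
      using e R by (intro has_integral_powr_from_0) auto
    then have "((\<lambda>r. ?c * r powr (real ?N - 1 + e)) has_integral ?c * (R powr (real ?N - 1 + e + 1) / (real ?N - 1 + e + 1))) {0..R}"
      by (rule has_integral_mult_right)
    then show "((\<lambda>r. if r \<in> {0..R} then ?c * r powr (real ?N - 1 + e) else 0) has_integral ?c * (R powr (real ?N - 1 + e + 1) / (real ?N - 1 + e + 1))) UNIV"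
      by (subst has_integral_restrict_UNIV)
  qed auto
  finally show ?thesis by simp
qed

lemma far_integral:
  assumes R: "0 < R" and e: "e < - real DIM('a)"
  shows "(\<integral>\<^sup>+x. ennreal (if R < norm x then norm x powr e else 0) \<partial>(lborel::'a::euclidean_space measure))
       = ennreal (real DIM('a) * unit_ball_vol (real DIM('a)) * R powr (real DIM('a) + e) / (- (real DIM('a) + e)))"
proof -
  let ?N = "DIM('a)" let ?c = "real ?N * unit_ball_vol (real ?N)"
  have c0: "0 \<le> ?c" by simp
  have "(\<integral>\<^sup>+x. ennreal (if R < norm x then norm x powr e else 0) \<partial>(lborel::'a measure))
      = (\<integral>\<^sup>+r. ennreal (radw ?N r) * ennreal (if R < r then r powr e else 0) \<partial>lborel)"
    by (rule radial_nn[where f="\<lambda>r. ennreal (if R < r then r powr e else 0)"]) measurable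
  also have "\<dots> = (\<integral>\<^sup>+r. ennreal (if r \<in> {R..} then ?c * r powr (real ?N - 1 + e) else 0) \<partial>lborel)"
  proof (intro nn_integral_cong_AE)
    show "AE r in lborel. ennreal (radw ?N r) * ennreal (if R < r then r powr e else 0) = ennreal (if r \<in> {R..} then ?c * r powr (real ?N - 1 + e) else 0)"
      using AE_lborel_singleton[of R]
    proof eventually_elim
      case (elim r)
      show ?case
      proof (cases "R < r")
        case True
        then have r: "0 < r" using R by simp
        then show ?thesis using True radw_powr[OF r, of ?N e] radw_nonneg[of ?N r]
          by (auto simp: ennreal_mult'[symmetric])
      next
        case False
        then show ?thesis using elim by auto
      qed
    qed
  qed
  also have "\<dots> = ennreal (?c * (- (R powr (real ?N - 1 + e + 1)) / (real ?N - 1 + e + 1)))"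
  proof (rule nn_integral_has_integral_lborel)
    have "((\<lambda>r. r powr (real ?N - 1 + e)) has_integral (- (R powr (real ?N - 1 + e + 1)) / (real ?N - 1 + e + 1))) {R..}"
      using e R by (intro has_integral_powr_to_inf) auto
    then have "((\<lambda>r. ?c * r powr (real ?N - 1 + e)) has_integral ?c * (- (R powr (real ?N - 1 + e + 1)) / (real ?N - 1 + e + 1))) {R..}"
      by (rule has_integral_mult_right)
    then show "((\<lambda>r. if r \<in> {R..} then ?c * r powr (real ?N - 1 + e) else 0) has_integral ?c * (- (R powr (real ?N - 1 + e + 1)) / (real ?N - 1 + e + 1))) UNIV"
      by (subst has_integral_restrict_UNIV)
    show "0 \<le> (if x \<in> {R..} then ?c * x powr (real ?N - 1 + e) else 0)" for x by simp
  qed auto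
  also have "?c * (- (R powr (real ?N - 1 + e + 1)) / (real ?N - 1 + e + 1)) = ?c * R powr (real ?N + e) / (- (real ?N + e))"
    by (simp add: minus_divide_right)
  finally show ?thesis .
qed

lemma enn_powr_measurable[measurable]:
  assumes [measurable]: "f \<in> borel_measurable M"
  shows "(\<lambda>x. enn_powr (f x) q) \<in> borel_measurable M"
  unfolding enn_powr_def by measurable

lemma riesz_kernel_measurable[measurable]: "riesz_kernel s \<in> borel_measurable borel"
  unfolding riesz_kernel_def by measurable

lemma nn_translate:
  fixes f :: "'a::euclidean_space \<Rightarrow> ennreal"
  assumes [measurable]: "f \<in> borel_measurable borel"
  shows "(\<integral>\<^sup>+x. f (x - y) \<partial>lborel) = (\<integral>\<^sup>+x. f x \<partial>lborel)"
proof -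
  have "(\<integral>\<^sup>+x. f x \<partial>lborel) = (\<integral>\<^sup>+x. f x \<partial>distr lborel borel ((+) (-y)))"
    by (simp add: lborel_distr_plus)
  also have "\<dots> = (\<integral>\<^sup>+x. f (-y + x) \<partial>lborel)"
    by (subst nn_integral_distr) auto
  finally show ?thesis by simp
qed

lemma enn_powr_split:
  fixes a b :: ennreal
  assumes t: "0 < t" "t < 1" and m: "1 < m"
  shows "enn_powr (a + b) m \<le> ennreal (t powr (1-m)) * enn_powr a m + ennreal ((1-t) powr (1-m)) * enn_powr b m"
proof (cases "a = \<infinity> \<or> b = \<infinity>")
  case True
  then show ?thesis using t by (auto simp: enn_powr_def ennreal_mult_top)
next
  case False
  then obtain a0 b0 where ab: "a = ennreal a0" "b = ennreal b0" "0 \<le> a0" "0 \<le> b0"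
    by (cases a; cases b) auto
  have "(a0 + b0) powr m \<le> t powr (1-m) * a0 powr m + (1-t) powr (1-m) * b0 powr m"
    using convex_split[OF ab(3,4) t m] .
  then show ?thesis using ab
    by (simp add: enn_powr_ennreal ennreal_plus[symmetric] ennreal_mult'[symmetric] del: ennreal_plus)
qed

definition kn :: "real \<Rightarrow> real \<Rightarrow> 'a::euclidean_space \<Rightarrow> real" where
  "kn s R z = (if norm z \<le> R then riesz_kernel s z else 0)"
definition kf :: "real \<Rightarrow> real \<Rightarrow> 'a::euclidean_space \<Rightarrow> real" where
  "kf s R z = (if R < norm z then riesz_kernel s z else 0)"

lemma kn_meas[measurable]: "kn s R \<in> borel_measurable borel"
  unfolding kn_def by measurable
lemma kf_meas[measurable]: "kf s R \<in> borel_measurable borel"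
  unfolding kf_def by measurable

lemma kernel_split: "riesz_kernel s z = kn s R z + kf s R z"
  by (auto simp: kn_def kf_def)

lemma kernel_nonneg: "0 \<le> riesz_const DIM('a) (s/2) \<Longrightarrow> 0 \<le> riesz_kernel s (z::'a::euclidean_space)"
  by (simp add: riesz_kernel_def)

lemma kn_nonneg: "0 \<le> riesz_const DIM('a) (s/2) \<Longrightarrow> 0 \<le> kn s R (z::'a::euclidean_space)"
  by (simp add: kn_def kernel_nonneg)
lemma kf_nonneg: "0 \<le> riesz_const DIM('a) (s/2) \<Longrightarrow> 0 \<le> kf s R (z::'a::euclidean_space)"
  by (simp add: kf_def kernel_nonneg)

lemma kn_sym: "kn s R (x - y) = kn s R (y - x)"
  by (simp add: kn_def riesz_kernel_def norm_minus_commute)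
lemma kf_sym: "kf s R (x - y) = kf s R (y - x)"
  by (simp add: kf_def riesz_kernel_def norm_minus_commute)

lemma kn_integral:
  assumes c: "0 \<le> riesz_const DIM('a) (s/2)" and s: "0 < s" and R: "0 < R"
  shows "(\<integral>\<^sup>+z. ennreal (kn s R (z::'a::euclidean_space)) \<partial>lborel)
     = ennreal (riesz_const DIM('a) (s/2) * (real DIM('a) * unit_ball_vol (real DIM('a)) * R powr s / s))"
proof -
  let ?c = "riesz_const DIM('a) (s/2)"
  have "(\<integral>\<^sup>+z. ennreal (kn s R (z::'a)) \<partial>lborel)
      = (\<integral>\<^sup>+z. ennreal ?c * ennreal (if norm z \<le> R then norm z powr (s - real DIM('a)) else 0) \<partial>(lborel::'a measure))"
    using c by (intro nn_integral_cong) (auto simp: kn_def riesz_kernel_def ennreal_mult'[symmetric])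
  also have "\<dots> = ennreal ?c * (\<integral>\<^sup>+z. ennreal (if norm z \<le> R then norm z powr (s - real DIM('a)) else 0) \<partial>(lborel::'a measure))"
    by (rule nn_integral_cmult) measurable
  also have "\<dots> = ennreal ?c * ennreal (real DIM('a) * unit_ball_vol (real DIM('a)) * R powr s / s)"
    using near_integral[OF R, of "s - real DIM('a)", where 'a='a] s by simp
  finally show ?thesis using c by (simp add: ennreal_mult'[symmetric])
qed

lemma kf_integral:
  assumes c: "0 \<le> riesz_const DIM('a) (s/2)" and R: "0 < R" and m: "0 < m"
    and e: "(s - real DIM('a)) * m < - real DIM('a)"
  shows "(\<integral>\<^sup>+z. ennreal (kf s R (z::'a::euclidean_space) powr m) \<partial>lborel)
     = ennreal (riesz_const DIM('a) (s/2) powr m * (real DIM('a) * unit_ball_vol (real DIM('a))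
         * R powr (real DIM('a) + (s - real DIM('a)) * m) / (- (real DIM('a) + (s - real DIM('a)) * m))))"
proof -
  let ?c = "riesz_const DIM('a) (s/2)"
  let ?e = "(s - real DIM('a)) * m"
  have "(\<integral>\<^sup>+z. ennreal (kf s R (z::'a) powr m) \<partial>lborel)
      = (\<integral>\<^sup>+z. ennreal (?c powr m) * ennreal (if R < norm z then norm z powr ?e else 0) \<partial>(lborel::'a measure))"
    using c R by (intro nn_integral_cong) (auto simp: kf_def riesz_kernel_def ennreal_mult'[symmetric] powr_mult powr_powr)
  also have "\<dots> = ennreal (?c powr m) * (\<integral>\<^sup>+z. ennreal (if R < norm z then norm z powr ?e else 0) \<partial>(lborel::'a measure))"
    by (rule nn_integral_cmult) measurable
  also have "\<dots> = ennreal (?c powr m) * ennreal (real DIM('a) * unit_ball_vol (real DIM('a)) * R powr (real DIM('a) + ?e) / (- (real DIM('a) + ?e)))"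
    using far_integral[OF R e] by simp
  finally show ?thesis by (simp add: ennreal_mult'[symmetric])
qed

lemma key_bound:
  fixes rho :: "'a::euclidean_space \<Rightarrow> real"
  assumes [measurable]: "rho \<in> borel_measurable borel" and r0: "\<And>x. 0 \<le> rho x"
  and mass: "(\<integral>\<^sup>+x. ennreal (rho x) \<partial>lborel) = ennreal M" and M: "0 < M"
  and Aeq: "(\<integral>\<^sup>+x. ennreal (rho x powr m) \<partial>lborel) = ennreal A" and A0: "0 \<le> A"
  and c: "0 < riesz_const DIM('a) (s/2)" and s: "0 < s" and R: "0 < R"
  and e: "(s - real DIM('a)) * m < - real DIM('a)"
  and t: "0 < t" "t < 1" and m: "1 < m"
  defines "G \<equiv> riesz_const DIM('a) (s/2) * (real DIM('a) * unit_ball_vol (real DIM('a)) * R powr s / s)"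
  and "H \<equiv> riesz_const DIM('a) (s/2) powr m * (real DIM('a) * unit_ball_vol (real DIM('a))
         * R powr (real DIM('a) + (s - real DIM('a)) * m) / (- (real DIM('a) + (s - real DIM('a)) * m)))"
  shows "(\<integral>\<^sup>+x. enn_powr (riesz_conv s rho x) m \<partial>lborel)
     \<le> ennreal (t powr (1-m) * G powr m * A + (1-t) powr (1-m) * M powr m * H)"
proof -
  let ?c = "riesz_const DIM('a) (s/2)"
  have c0: "0 \<le> ?c" using c by simp
  have G0: "0 < G" unfolding G_def using c s R by (intro mult_pos_pos divide_pos_pos) auto
  have H0: "0 \<le> H" unfolding H_def using c R e by (intro mult_nonneg_nonneg divide_nonneg_nonneg) auto
  have Gint: "(\<integral>\<^sup>+y. ennreal (kn s R (x - y)) \<partial>lborel) = ennreal G" for x :: 'a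
  proof -
    have "(\<integral>\<^sup>+y. ennreal (kn s R (x - y)) \<partial>lborel) = (\<integral>\<^sup>+y. ennreal (kn s R (y - x)) \<partial>(lborel::'a measure))"
      by (simp add: kn_sym)
    also have "\<dots> = (\<integral>\<^sup>+y. ennreal (kn s R y) \<partial>(lborel::'a measure))"
      by (rule nn_translate[where f="\<lambda>z. ennreal (kn s R z)"]) measurable
    also have "\<dots> = ennreal G" unfolding G_def by (rule kn_integral[OF c0 s R])
    finally show ?thesis .
  qed
  have Gint2: "(\<integral>\<^sup>+x. ennreal (kn s R (x - y)) \<partial>lborel) = ennreal G" for y :: 'a
  proof -
    have "(\<integral>\<^sup>+x. ennreal (kn s R (x - y)) \<partial>lborel) = (\<integral>\<^sup>+x. ennreal (kn s R x) \<partial>(lborel::'a measure))"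
      by (rule nn_translate[where f="\<lambda>z. ennreal (kn s R z)"]) measurable
    also have "\<dots> = ennreal G" unfolding G_def by (rule kn_integral[OF c0 s R])
    finally show ?thesis .
  qed
  have Hint: "(\<integral>\<^sup>+x. ennreal (kf s R (x - y) powr m) \<partial>lborel) = ennreal H" for y :: 'a
  proof -
    have "(\<integral>\<^sup>+x. ennreal (kf s R (x - y) powr m) \<partial>lborel) = (\<integral>\<^sup>+x. ennreal (kf s R x powr m) \<partial>(lborel::'a measure))"
      by (rule nn_translate[where f="\<lambda>z. ennreal (kf s R z powr m)"]) measurable
    also have "\<dots> = ennreal H" unfolding H_def using m by (intro kf_integral[OF c0 R _ e]) auto
    finally show ?thesis .
  qed
  define Cn where "Cn x = (\<integral>\<^sup>+y. ennreal (kn s R (x - y) * rho y) \<partial>lborel)" for x :: 'a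
  define Cf where "Cf x = (\<integral>\<^sup>+y. ennreal (rho y * kf s R (x - y)) \<partial>lborel)" for x :: 'a
  have Cn_meas[measurable]: "Cn \<in> borel_measurable lborel" unfolding Cn_def by measurable
  have Cf_meas[measurable]: "Cf \<in> borel_measurable lborel" unfolding Cf_def by measurable
  have conv: "riesz_conv s rho x = Cn x + Cf x" for x
  proof -
    have "riesz_conv s rho x = (\<integral>\<^sup>+y. ennreal (kn s R (x - y) * rho y) + ennreal (rho y * kf s R (x - y)) \<partial>lborel)"
      unfolding riesz_conv_def
      using kn_nonneg[OF c0] kf_nonneg[OF c0] r0
      by (intro nn_integral_cong) (simp add: kernel_split[of s _ R] ennreal_plus[symmetric] algebra_simps del: ennreal_plus)
    also have "\<dots> = Cn x + Cf x" unfolding Cn_def Cf_def by (rule nn_integral_add) auto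
    finally show ?thesis .
  qed
  have hn: "enn_powr (Cn x) m \<le> ennreal (G powr (m-1)) * (\<integral>\<^sup>+y. ennreal (kn s R (x - y) * rho y powr m) \<partial>lborel)" for x
    unfolding Cn_def
    by (rule holder_w[OF _ _ kn_nonneg[OF c0] r0 Gint G0 m]) measurable
  have hf: "enn_powr (Cf x) m \<le> ennreal (M powr (m-1)) * (\<integral>\<^sup>+y. ennreal (rho y * kf s R (x - y) powr m) \<partial>lborel)" for x
    unfolding Cf_def
    by (rule holder_w[OF _ _ r0 kf_nonneg[OF c0] mass M m]) measurable
  have int_n: "(\<integral>\<^sup>+x. (\<integral>\<^sup>+y. ennreal (kn s R (x - y) * rho y powr m) \<partial>lborel) \<partial>lborel) = ennreal (G * A)"
  proof -
    have "(\<integral>\<^sup>+x. (\<integral>\<^sup>+y. ennreal (kn s R (x - y) * rho y powr m) \<partial>lborel) \<partial>lborel)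
        = (\<integral>\<^sup>+y. (\<integral>\<^sup>+x. ennreal (kn s R (x - y) * rho y powr m) \<partial>lborel) \<partial>(lborel::'a measure))"
      by (rule lborel_pair.Fubini'[symmetric]) measurable
    also have "\<dots> = (\<integral>\<^sup>+y. ennreal G * ennreal (rho y powr m) \<partial>lborel)"
      using kn_nonneg[OF c0]
      by (intro nn_integral_cong) (simp add: ennreal_mult nn_integral_multc Gint2)
    also have "\<dots> = ennreal G * ennreal A" by (simp add: nn_integral_cmult Aeq)
    finally show ?thesis using G0 A0 by (simp add: ennreal_mult)
  qed
  have int_f: "(\<integral>\<^sup>+x. (\<integral>\<^sup>+y. ennreal (rho y * kf s R (x - y) powr m) \<partial>lborel) \<partial>lborel) = ennreal (M * H)"
  proof -
    have "(\<integral>\<^sup>+x. (\<integral>\<^sup>+y. ennreal (rho y * kf s R (x - y) powr m) \<partial>lborel) \<partial>lborel)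
        = (\<integral>\<^sup>+y. (\<integral>\<^sup>+x. ennreal (rho y * kf s R (x - y) powr m) \<partial>lborel) \<partial>(lborel::'a measure))"
      by (rule lborel_pair.Fubini'[symmetric]) measurable
    also have "\<dots> = (\<integral>\<^sup>+y. ennreal H * ennreal (rho y) \<partial>lborel)"
      using r0
      by (intro nn_integral_cong) (simp add: ennreal_mult nn_integral_cmult Hint mult.commute)
    also have "\<dots> = ennreal H * ennreal M" by (simp add: nn_integral_cmult mass)
    finally show ?thesis using H0 M by (simp add: ennreal_mult mult.commute)
  qed
  define T1 where "T1 = t powr (1-m)"
  define T2 where "T2 = (1-t) powr (1-m)"
  have "(\<integral>\<^sup>+x. enn_powr (riesz_conv s rho x) m \<partial>lborel)
      \<le> (\<integral>\<^sup>+x. ennreal T1 * enn_powr (Cn x) m + ennreal T2 * enn_powr (Cf x) m \<partial>lborel)"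
    unfolding conv T1_def T2_def by (intro nn_integral_mono enn_powr_split t m)
  also have "\<dots> = ennreal T1 * (\<integral>\<^sup>+x. enn_powr (Cn x) m \<partial>lborel) + ennreal T2 * (\<integral>\<^sup>+x. enn_powr (Cf x) m \<partial>lborel)"
    by (simp add: nn_integral_add nn_integral_cmult)
  also have "\<dots> \<le> ennreal T1 * (ennreal (G powr (m-1)) * ennreal (G * A)) + ennreal T2 * (ennreal (M powr (m-1)) * ennreal (M * H))"
  proof (intro add_mono mult_left_mono order_refl)
    have "(\<integral>\<^sup>+x. enn_powr (Cn x) m \<partial>lborel) \<le> (\<integral>\<^sup>+x. ennreal (G powr (m-1)) * (\<integral>\<^sup>+y. ennreal (kn s R (x - y) * rho y powr m) \<partial>lborel) \<partial>lborel)"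
      by (intro nn_integral_mono hn)
    also have "\<dots> = ennreal (G powr (m-1)) * ennreal (G * A)"
      by (subst nn_integral_cmult) (measurable, simp add: int_n)
    finally show "(\<integral>\<^sup>+x. enn_powr (Cn x) m \<partial>lborel) \<le> ennreal (G powr (m-1)) * ennreal (G * A)" .
    have "(\<integral>\<^sup>+x. enn_powr (Cf x) m \<partial>lborel) \<le> (\<integral>\<^sup>+x. ennreal (M powr (m-1)) * (\<integral>\<^sup>+y. ennreal (rho y * kf s R (x - y) powr m) \<partial>lborel) \<partial>lborel)"
      by (intro nn_integral_mono hf)
    also have "\<dots> = ennreal (M powr (m-1)) * ennreal (M * H)"
      by (subst nn_integral_cmult) (measurable, simp add: int_f)
    finally show "(\<integral>\<^sup>+x. enn_powr (Cf x) m \<partial>lborel) \<le> ennreal (M powr (m-1)) * ennreal (M * H)" .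
  qed simp_all
  also have "\<dots> = ennreal (T1 * (G powr (m-1) * G) * A + T2 * (M powr (m-1) * M) * H)"
    using G0 M A0 H0 t unfolding T1_def T2_def
    by (simp add: ennreal_mult'[symmetric] ennreal_plus[symmetric] mult_nonneg_nonneg ac_simps del: ennreal_plus)
  also have "G powr (m-1) * G = G powr m" using G0 by (simp add: powr_diff)
  also have "M powr (m-1) * M = M powr m" using M by (simp add: powr_diff)
  finally show ?thesis unfolding T1_def T2_def .
qed

lemma lborel_scale_eq:
  assumes l: "0 < l"
  shows "(lborel::'a::euclidean_space measure) = density (distr lborel borel (\<lambda>x. l *\<^sub>R x)) (\<lambda>_. ennreal (l ^ DIM('a)))"
  using lborel_affine[of l "0::'a"] l by simp

lemma nn_scale:
  fixes f :: "'a::euclidean_space \<Rightarrow> ennreal"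
  assumes [measurable]: "f \<in> borel_measurable borel" and l: "0 < l"
  shows "(\<integral>\<^sup>+x. f x \<partial>lborel) = ennreal (l ^ DIM('a)) * (\<integral>\<^sup>+x. f (l *\<^sub>R x) \<partial>lborel)"
proof -
  have "(\<integral>\<^sup>+x. f x \<partial>lborel) = (\<integral>\<^sup>+x. f x \<partial>density (distr lborel borel (\<lambda>x. l *\<^sub>R x)) (\<lambda>_. ennreal (l ^ DIM('a))))"
    by (rule arg_cong[where f="\<lambda>M. nn_integral M f", OF lborel_scale_eq[OF l]])
  also have "\<dots> = (\<integral>\<^sup>+x. ennreal (l ^ DIM('a)) * f (l *\<^sub>R x) \<partial>lborel)"
    by (simp add: nn_integral_density nn_integral_distr)
  also have "\<dots> = ennreal (l ^ DIM('a)) * (\<integral>\<^sup>+x. f (l *\<^sub>R x) \<partial>lborel)"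
    by (rule nn_integral_cmult) measurable
  finally show ?thesis .
qed

lemma int_scale:
  fixes f :: "'a::euclidean_space \<Rightarrow> 'b::{banach, second_countable_topology}"
  assumes [measurable]: "f \<in> borel_measurable borel" and l: "0 < l"
  shows "integral\<^sup>L lborel f = l ^ DIM('a) *\<^sub>R integral\<^sup>L lborel (\<lambda>x. f (l *\<^sub>R x))"
    and "integrable lborel f \<longleftrightarrow> integrable lborel (\<lambda>x. f (l *\<^sub>R x))"
proof -
  have "integral\<^sup>L lborel f = integral\<^sup>L (density (distr lborel borel (\<lambda>x. l *\<^sub>R x)) (\<lambda>_. ennreal (l ^ DIM('a)))) f"
    by (rule arg_cong[where f="\<lambda>M. integral\<^sup>L M f", OF lborel_scale_eq[OF l]])
  also have "\<dots> = integral\<^sup>L (distr lborel borel (\<lambda>x. l *\<^sub>R x)) (\<lambda>x. l ^ DIM('a) *\<^sub>R f x)"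
    using l by (subst integral_density) auto
  also have "\<dots> = integral\<^sup>L lborel (\<lambda>x. l ^ DIM('a) *\<^sub>R f (l *\<^sub>R x))"
    by (subst integral_distr) auto
  finally show "integral\<^sup>L lborel f = l ^ DIM('a) *\<^sub>R integral\<^sup>L lborel (\<lambda>x. f (l *\<^sub>R x))"
    by simp
  have "integrable lborel f \<longleftrightarrow> integrable (density (distr lborel borel (\<lambda>x. l *\<^sub>R x)) (\<lambda>_. ennreal (l ^ DIM('a)))) f"
    by (rule arg_cong[where f="\<lambda>M. integrable M f", OF lborel_scale_eq[OF l]])
  also have "\<dots> \<longleftrightarrow> integrable (distr lborel borel (\<lambda>x. l *\<^sub>R x)) (\<lambda>x. l ^ DIM('a) *\<^sub>R f x)"
    using l by (subst integrable_density) auto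
  also have "\<dots> \<longleftrightarrow> integrable lborel (\<lambda>x. l ^ DIM('a) *\<^sub>R f (l *\<^sub>R x))"
    by (subst integrable_distr_eq) auto
  also have "\<dots> \<longleftrightarrow> integrable lborel (\<lambda>x. f (l *\<^sub>R x))"
  proof
    assume "integrable lborel (\<lambda>x. l ^ DIM('a) *\<^sub>R f (l *\<^sub>R x))"
    then have "integrable lborel (\<lambda>x. (1 / l ^ DIM('a)) *\<^sub>R (l ^ DIM('a) *\<^sub>R f (l *\<^sub>R x)))"
      by (rule integrable_scaleR_right)
    then show "integrable lborel (\<lambda>x. f (l *\<^sub>R x))" using l by simp
  qed (rule integrable_scaleR_right)
  finally show "integrable lborel f \<longleftrightarrow> integrable lborel (\<lambda>x. f (l *\<^sub>R x))" .
qed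

definition dil :: "real \<Rightarrow> ('a::euclidean_space \<Rightarrow> real) \<Rightarrow> 'a \<Rightarrow> real" where
  "dil l rho x = l ^ DIM('a) * rho (l *\<^sub>R x)"

lemma meas_lborel_iff: "f \<in> borel_measurable lborel \<longleftrightarrow> f \<in> borel_measurable borel"
  by (simp add: measurable_cong_sets[OF sets_lborel refl])

lemma riesz_conv_meas[measurable]:
  assumes [measurable]: "rho \<in> borel_measurable borel"
  shows "riesz_conv s rho \<in> borel_measurable borel"
proof -
  have "riesz_conv s rho \<in> borel_measurable lborel" unfolding riesz_conv_def by measurable
  then show ?thesis by (simp add: meas_lborel_iff)
qed

lemma enn_powr_cmult:
  assumes "0 < a" "0 < q"
  shows "enn_powr (ennreal a * v) q = ennreal (a powr q) * enn_powr v q"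
proof (cases "v = \<infinity>")
  case True then show ?thesis using assms by (simp add: enn_powr_def ennreal_mult_top)
next
  case False
  then obtain v0 where v: "v = ennreal v0" "0 \<le> v0" by (cases v) auto
  then show ?thesis using assms
    by (simp add: enn_powr_def ennreal_mult'[symmetric] powr_mult)
qed

lemma dil_adm:
  fixes rho :: "'a::euclidean_space \<Rightarrow> real"
  assumes rho: "rho \<in> admissible m M" and l: "0 < l"
  shows "dil l rho \<in> admissible m M"
    and "(\<integral>x. dil l rho x powr m \<partial>lborel) = l powr (real DIM('a) * (m - 1)) * (\<integral>x. rho x powr m \<partial>lborel)"
proof -
  let ?N = "DIM('a)"
  have [measurable]: "rho \<in> borel_measurable borel" and r0: "\<And>x. 0 \<le> rho x"
    and i1: "integrable lborel rho" and i2: "integrable lborel (\<lambda>x. rho x powr m)"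
    and e1: "(\<integral>x. rho x \<partial>lborel) = M" and i3: "integrable lborel (\<lambda>x. rho x *\<^sub>R x)"
    and e3: "(\<integral>x. rho x *\<^sub>R x \<partial>lborel) = 0"
    using rho by (auto simp: admissible_def meas_lborel_iff)
  have lN: "0 < l ^ ?N" using l by simp
  have dm[measurable]: "dil l rho \<in> borel_measurable borel" unfolding dil_def by measurable
  have d0: "0 \<le> dil l rho x" for x using r0 l by (simp add: dil_def)
  have j1: "integrable lborel (\<lambda>x. rho (l *\<^sub>R x))" using i1 int_scale(2)[of rho l] l by simp
  have di1: "integrable lborel (dil l rho)"
    unfolding dil_def by (intro integrable_mult_right j1)
  have de1: "(\<integral>x. dil l rho x \<partial>lborel) = M"
    using int_scale(1)[of rho l] l e1 unfolding dil_def by simp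
  have pw: "dil l rho x powr m = l powr (real ?N * m) * rho (l *\<^sub>R x) powr m" for x
    using l r0 by (simp add: dil_def powr_mult powr_realpow[symmetric] powr_powr)
  have j2: "integrable lborel (\<lambda>x. rho (l *\<^sub>R x) powr m)"
    using i2 int_scale(2)[of "\<lambda>x. rho x powr m" l] l by simp
  have di2: "integrable lborel (\<lambda>x. dil l rho x powr m)"
    unfolding pw by (intro integrable_mult_right j2)
  have "(\<integral>x. dil l rho x powr m \<partial>lborel) = l powr (real ?N * m) * (\<integral>x. rho (l *\<^sub>R x) powr m \<partial>lborel)"
    unfolding pw by simp
  also have "(\<integral>x. rho (l *\<^sub>R x) powr m \<partial>lborel) = (\<integral>x. rho x powr m \<partial>lborel) / l ^ ?N"
    using int_scale(1)[of "\<lambda>x. rho x powr m" l] l by simp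
  also have "l powr (real ?N * m) * ((\<integral>x. rho x powr m \<partial>lborel) / l ^ ?N) = l powr (real ?N * (m - 1)) * (\<integral>x. rho x powr m \<partial>lborel)"
    using l by (simp add: powr_realpow[symmetric] right_diff_distrib powr_diff)
  finally show de2: "(\<integral>x. dil l rho x powr m \<partial>lborel) = l powr (real ?N * (m - 1)) * (\<integral>x. rho x powr m \<partial>lborel)" .
  have mo: "dil l rho x *\<^sub>R x = (l ^ ?N / l) *\<^sub>R (rho (l *\<^sub>R x) *\<^sub>R (l *\<^sub>R x))" for x
    using l by (simp add: dil_def)
  have j3: "integrable lborel (\<lambda>x. rho (l *\<^sub>R x) *\<^sub>R (l *\<^sub>R x))"
    using i3 int_scale(2)[of "\<lambda>x. rho x *\<^sub>R x" l] l by simp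
  have di3: "integrable lborel (\<lambda>x. dil l rho x *\<^sub>R x)"
    unfolding mo by (intro integrable_scaleR_right j3)
  have de3: "(\<integral>x. dil l rho x *\<^sub>R x \<partial>lborel) = 0"
  proof -
    have "(\<integral>x. dil l rho x *\<^sub>R x \<partial>lborel) = (l ^ ?N / l) *\<^sub>R (\<integral>x. rho (l *\<^sub>R x) *\<^sub>R (l *\<^sub>R x) \<partial>lborel)"
      unfolding mo by (rule integral_scaleR_right)
    moreover have "(\<integral>x. rho (l *\<^sub>R x) *\<^sub>R (l *\<^sub>R x) \<partial>lborel) = 0"
      using int_scale(1)[of "\<lambda>x. rho x *\<^sub>R x" l] l e3 by simp
    ultimately show ?thesis by simp
  qed
  show "dil l rho \<in> admissible m M"
    using di1 di2 di3 de1 de3 d0 unfolding admissible_def by (auto simp: meas_lborel_iff)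
qed

lemma conv_dil:
  fixes rho :: "'a::euclidean_space \<Rightarrow> real"
  assumes [measurable]: "rho \<in> borel_measurable borel" and l: "0 < l"
  shows "riesz_conv s (dil l rho) x = ennreal (l powr (real DIM('a) - s)) * riesz_conv s rho (l *\<^sub>R x)"
proof -
  let ?N = "DIM('a)"
  define f where "f z = ennreal (riesz_kernel s (x - (1/l) *\<^sub>R z) * rho z)" for z :: 'a
  have [measurable]: "f \<in> borel_measurable borel" unfolding f_def by measurable
  have K: "riesz_kernel s (x - (1/l) *\<^sub>R z) = l powr (real ?N - s) * riesz_kernel s (l *\<^sub>R x - z)" for z
  proof -
    have "x - (1/l) *\<^sub>R z = (1/l) *\<^sub>R (l *\<^sub>R x - z)" using l by (simp add: algebra_simps)
    then have n: "norm (x - (1/l) *\<^sub>R z) = norm (l *\<^sub>R x - z) / l" using l by simp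
    have li: "l powr (real ?N - s) = 1 / l powr (s - real ?N)"
      using powr_minus_divide[of l "s - real ?N"] by simp
    have "riesz_kernel s (x - (1/l) *\<^sub>R z) = riesz_const ?N (s/2) * ((norm (l *\<^sub>R x - z) / l) powr (s - real ?N))"
      by (simp add: riesz_kernel_def n)
    also have "(norm (l *\<^sub>R x - z) / l) powr (s - real ?N) = norm (l *\<^sub>R x - z) powr (s - real ?N) / l powr (s - real ?N)"
      using l by (simp add: powr_divide)
    finally show ?thesis unfolding li by (simp add: riesz_kernel_def)
  qed
  have "riesz_conv s (dil l rho) x = (\<integral>\<^sup>+y. ennreal (l ^ ?N) * f (l *\<^sub>R y) \<partial>lborel)"
    unfolding riesz_conv_def f_def dil_def using l
    by (intro nn_integral_cong) (simp add: ennreal_mult'[symmetric] ac_simps)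
  also have "\<dots> = ennreal (l ^ ?N) * (\<integral>\<^sup>+y. f (l *\<^sub>R y) \<partial>lborel)"
    by (rule nn_integral_cmult) measurable
  also have "\<dots> = (\<integral>\<^sup>+z. f z \<partial>lborel)"
    by (rule nn_scale[symmetric]) (auto simp: l)
  also have "\<dots> = (\<integral>\<^sup>+z. ennreal (l powr (real ?N - s)) * ennreal (riesz_kernel s (l *\<^sub>R x - z) * rho z) \<partial>lborel)"
    unfolding f_def K by (intro nn_integral_cong) (simp add: ennreal_mult'[symmetric] ac_simps)
  also have "\<dots> = ennreal (l powr (real ?N - s)) * riesz_conv s rho (l *\<^sub>R x)"
    unfolding riesz_conv_def by (rule nn_integral_cmult) measurable
  finally show ?thesis .
qed

lemma B_dil:
  fixes rho :: "'a::euclidean_space \<Rightarrow> real"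
  assumes [measurable]: "rho \<in> borel_measurable borel" and l: "0 < l" and m: "0 < m"
  shows "(\<integral>\<^sup>+x. enn_powr (riesz_conv s (dil l rho) x) m \<partial>lborel)
    = ennreal (l powr ((real DIM('a) - s) * m - real DIM('a))) * (\<integral>\<^sup>+x. enn_powr (riesz_conv s rho x) m \<partial>lborel)"
proof -
  let ?N = "DIM('a)"
  have "(\<integral>\<^sup>+x. enn_powr (riesz_conv s (dil l rho) x) m \<partial>lborel)
      = (\<integral>\<^sup>+x. ennreal (l powr ((real ?N - s) * m)) * enn_powr (riesz_conv s rho (l *\<^sub>R x)) m \<partial>lborel)"
    using l m by (intro nn_integral_cong) (simp add: conv_dil enn_powr_cmult powr_powr)
  also have "\<dots> = ennreal (l powr ((real ?N - s) * m)) * (\<integral>\<^sup>+x. enn_powr (riesz_conv s rho (l *\<^sub>R x)) m \<partial>lborel)"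
    by (rule nn_integral_cmult) measurable
  also have "(\<integral>\<^sup>+x. enn_powr (riesz_conv s rho (l *\<^sub>R x)) m \<partial>lborel)
      = ennreal (1 / l ^ ?N) * (\<integral>\<^sup>+x. enn_powr (riesz_conv s rho x) m \<partial>lborel)"
  proof -
    have "(\<integral>\<^sup>+x. enn_powr (riesz_conv s rho x) m \<partial>lborel) = ennreal (l ^ ?N) * (\<integral>\<^sup>+x. enn_powr (riesz_conv s rho (l *\<^sub>R x)) m \<partial>lborel)"
      by (rule nn_scale) (auto simp: l)
    then have "ennreal (1 / l ^ ?N) * (\<integral>\<^sup>+x. enn_powr (riesz_conv s rho x) m \<partial>lborel)
       = (ennreal (1 / l ^ ?N) * ennreal (l ^ ?N)) * (\<integral>\<^sup>+x. enn_powr (riesz_conv s rho (l *\<^sub>R x)) m \<partial>lborel)"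
      by (simp add: mult.assoc)
    also have "ennreal (1 / l ^ ?N) * ennreal (l ^ ?N) = 1" using l by (simp add: ennreal_mult'[symmetric])
    finally show ?thesis by simp
  qed
  also have "ennreal (l powr ((real ?N - s) * m)) * (ennreal (1 / l ^ ?N) * (\<integral>\<^sup>+x. enn_powr (riesz_conv s rho x) m \<partial>lborel))
     = ennreal (l powr ((real ?N - s) * m - real ?N)) * (\<integral>\<^sup>+x. enn_powr (riesz_conv s rho x) m \<partial>lborel)"
    using l by (simp add: mult.assoc[symmetric] ennreal_mult'[symmetric] powr_diff powr_realpow)
  finally show ?thesis .
qed

lemma pohozaev_real:
  fixes a A B al be :: real
  assumes a: "0 < a" and h: "\<And>l. 0 < l \<Longrightarrow> a * (A - B) \<le> a * (l powr al * A - l powr be * B)"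
  shows "al * A = be * B"
proof -
  define h where "h l = a * (l powr al * A - l powr be * B)" for l :: real
  have d: "(h has_real_derivative a * (al * A - be * B)) (at 1)"
    unfolding h_def by (auto intro!: derivative_eq_intros)
  have "a * (al * A - be * B) = 0"
  proof (rule DERIV_local_min[OF d, of 1])
    show "\<forall>y. \<bar>1 - y\<bar> < 1 \<longrightarrow> h 1 \<le> h y"
    proof (intro allI impI)
      fix y :: real assume "\<bar>1 - y\<bar> < 1"
      then have "0 < y" by linarith
      then show "h 1 \<le> h y" using h[of y] by (simp add: h_def)
    qed
  qed simp
  then show ?thesis using a by simp
qed

lemma pdiv_aux:
  fixes a c m :: real
  assumes "0 < a" "0 < c"
  shows "(a / c) powr (1-m) = a powr (1-m) * c powr (m-1)"
proof -
  have "c powr (m-1) = 1 / c powr (1-m)" using powr_minus_divide[of c "1-m"] by simp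
  then show ?thesis using assms by (simp add: powr_divide)
qed

lemma minkowski_real:
  fixes A G Hh x m :: real
  assumes A0: "0 \<le> A" and G: "0 < G" "G \<le> 1" and Hh: "0 < Hh" and m: "1 < m" and x: "0 \<le> x"
  and h: "\<And>t. 0 < t \<Longrightarrow> t < 1 \<Longrightarrow> x * A \<le> t powr (1-m) * G powr m * A + (1-t) powr (1-m) * Hh"
  shows "A powr (1/m) * (x powr (1/m) - 1) \<le> Hh powr (1/m)"
proof (cases "A = 0")
  case True then show ?thesis by simp
next
  case False
  with A0 have A: "0 < A" by simp
  define a where "a = A powr (1/m)"
  define b where "b = Hh powr (1/m)"
  have a0: "0 < a" and b0: "0 < b" using A Hh by (auto simp: a_def b_def)
  have am: "a powr m = A" using A m by (simp add: a_def powr_powr)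
  have bm: "b powr m = Hh" using Hh m by (simp add: b_def powr_powr)
  define t where "t = a / (a + b)"
  have t: "0 < t" "t < 1" using a0 b0 by (auto simp: t_def)
  have Gm: "G powr m \<le> 1" using G m by (simp add: powr_le1)
  have "x * A \<le> t powr (1-m) * G powr m * A + (1-t) powr (1-m) * Hh" by (rule h[OF t])
  also have "\<dots> \<le> t powr (1-m) * A + (1-t) powr (1-m) * Hh"
    using Gm A t Hh by (intro add_mono mult_right_mono) (auto intro: mult_left_le)
  also have "t powr (1-m) * A = a * (a + b) powr (m - 1)"
  proof -
    have "t powr (1-m) * A = (a / (a+b)) powr (1-m) * a powr m" by (simp add: t_def am)
    also have "\<dots> = a powr (1 - m) * (a+b) powr (m - 1) * a powr m"
      using a0 b0 by (simp add: pdiv_aux)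
    also have "\<dots> = a * (a+b) powr (m-1)"
      using a0 by (simp add: powr_add[symmetric] mult.commute mult.left_commute)
    finally show ?thesis .
  qed
  also have "(1-t) powr (1-m) * Hh = b * (a + b) powr (m - 1)"
  proof -
    have "1 - t = b / (a + b)" using a0 b0 by (simp add: t_def field_simps)
    then have "(1-t) powr (1-m) * Hh = (b / (a+b)) powr (1-m) * b powr m" by (simp add: bm)
    also have "\<dots> = b powr (1 - m) * (a+b) powr (m - 1) * b powr m"
      using a0 b0 by (simp add: pdiv_aux)
    also have "\<dots> = b * (a+b) powr (m-1)"
      using b0 by (simp add: powr_add[symmetric] mult.commute mult.left_commute)
    finally show ?thesis .
  qed
  also have "a * (a + b) powr (m - 1) + b * (a + b) powr (m - 1) = (a + b) powr m"
    using a0 b0 by (simp add: powr_diff add_divide_distrib[symmetric] distrib_right[symmetric])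
  finally have "x * a powr m \<le> (a + b) powr m" by (simp add: am)
  then have "(x * a powr m) powr (1/m) \<le> ((a + b) powr m) powr (1/m)"
    using x a0 m by (intro powr_mono2) auto
  then have "x powr (1/m) * a \<le> a + b"
    using x a0 b0 m by (simp add: powr_mult powr_powr)
  then show ?thesis by (simp add: a_def[symmetric] b_def[symmetric] algebra_simps)
qed

lemma root_lb:
  fixes x m :: real
  assumes "1 \<le> x" "0 < m"
  shows "1 + (1 - 1/x) / m \<le> x powr (1/m)"
proof -
  have "ln (1/x) \<le> 1/x - 1" using assms by (intro ln_le_minus_one) auto
  then have l: "1 - 1/x \<le> ln x" using assms by (simp add: ln_div)
  have "1 + ln x / m \<le> exp (ln x / m)" by (rule exp_ge_add_one_self)
  also have "exp (ln x / m) = x powr (1/m)" using assms by (simp add: powr_def)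
  finally show ?thesis using l assms by (smt (verit) divide_right_mono)
qed

definition phi :: "nat \<Rightarrow> real \<Rightarrow> real" where
  "phi n s = pi powr (- real n / 2) * 2 powr (- s) * Gamma (real n / 2 - s / 2) * rGamma (s / 2 + 1) / 2"

lemma riesz_const_phi:
  assumes s: "0 < s"
  shows "riesz_const n (s/2) = s * phi n s"
proof -
  have nz: "s/2 \<notin> \<int>\<^sub>\<le>\<^sub>0"
  proof
    assume "s/2 \<in> \<int>\<^sub>\<le>\<^sub>0"
    then have "s/2 \<le> 0" by (rule nonpos_Ints_nonpos)
    then show False using s by simp
  qed
  have g: "Gamma (s/2 + 1) = (s/2) * Gamma (s/2)" by (rule Gamma_plus1[OF nz])
  have gp: "0 < Gamma (s/2)" using s by (intro Gamma_real_pos) simp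
  have "rGamma (s/2 + 1) = inverse (Gamma (s/2 + 1))" by (simp add: rGamma_inverse_Gamma)
  also have "\<dots> = 1 / ((s/2) * Gamma (s/2))" by (simp only: g inverse_eq_divide)
  finally have "rGamma (s/2 + 1) = 1 / ((s/2) * Gamma (s/2))" .
  then have r: "(s/2) * rGamma (s/2 + 1) = 1 / Gamma (s/2)" using s gp by simp
  have "s * phi n s = (pi powr (- real n / 2) * 2 powr (- s) * Gamma (real n / 2 - s / 2)) * ((s/2) * rGamma (s / 2 + 1))"
    unfolding phi_def by (simp add: ac_simps)
  also have "\<dots> = riesz_const n (s/2)" unfolding r riesz_const_def by simp
  finally show ?thesis ..
qed

lemma riesz_const_pos:
  assumes "0 < s" "s < real n"
  shows "0 < riesz_const n (s/2)"
proof -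
  have "0 < Gamma (real n / 2 - s / 2)" using assms by (intro Gamma_real_pos) simp
  moreover have "0 < Gamma (s / 2)" using assms by (intro Gamma_real_pos) simp
  ultimately show ?thesis unfolding riesz_const_def by simp
qed

lemma phi_zero:
  assumes n: "0 < n"
  shows "phi n 0 * real n * unit_ball_vol (real n) = 1"
proof -
  have nz: "real n / 2 \<notin> \<int>\<^sub>\<le>\<^sub>0"
  proof
    assume "real n / 2 \<in> \<int>\<^sub>\<le>\<^sub>0"
    then have "real n / 2 \<le> 0" by (rule nonpos_Ints_nonpos)
    then show False using n by simp
  qed
  have g: "Gamma (real n / 2 + 1) = (real n / 2) * Gamma (real n / 2)" by (rule Gamma_plus1[OF nz])
  have gp: "0 < Gamma (real n / 2)" using n by (intro Gamma_real_pos) simp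
  have "pi powr (- real n / 2) * pi powr (real n / 2) = 1"
    using powr_minus[of pi "real n / 2"] by simp
  note hp = this
  have p0: "phi n 0 = pi powr (- real n / 2) * Gamma (real n / 2) / 2" by (simp add: phi_def)
  have u: "unit_ball_vol (real n) = pi powr (real n / 2) / ((real n / 2) * Gamma (real n / 2))"
    by (simp add: unit_ball_vol_def g)
  have aux: "a * b = 1 \<Longrightarrow> 0 < G \<Longrightarrow> 0 < x \<Longrightarrow> a * G / 2 * x * (b / (x / 2 * G)) = 1" for a b G x :: real
    by (simp add: field_simps)
  show ?thesis unfolding p0 u using aux[OF hp gp] n by simp
qed

lemma phi_deriv:
  assumes n: "0 < n"
  shows "\<exists>D. (phi n has_real_derivative D) (at 0)"
proof -
  have nz: "real n / 2 - 0 / 2 \<notin> \<int>\<^sub>\<le>\<^sub>0"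
  proof
    assume "real n / 2 - 0 / 2 \<in> \<int>\<^sub>\<le>\<^sub>0"
    then have "real n / 2 - 0 / 2 \<le> 0" by (rule nonpos_Ints_nonpos)
    then show False using n by simp
  qed
  have d1: "((\<lambda>x. Gamma (real n / 2 - x / 2)) has_real_derivative (Gamma (real n / 2 - 0 / 2) * Digamma (real n / 2 - 0 / 2) * (- 1/2))) (at 0)"
    by (rule DERIV_chain2[where f=Gamma and g="\<lambda>x. real n / 2 - x / 2", OF has_field_derivative_Gamma[OF nz, where A=UNIV]]) (auto intro!: derivative_eq_intros)
  have d2: "((\<lambda>x. rGamma (x / 2 + 1)) has_real_derivative (- rGamma (0 / 2 + 1) * Digamma (0 / 2 + 1) * (1/2))) (at 0)"
  proof -
    have nz1: "0 / 2 + 1 \<notin> (\<int>\<^sub>\<le>\<^sub>0 :: real set)"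
    proof
      assume "0 / 2 + 1 \<in> (\<int>\<^sub>\<le>\<^sub>0 :: real set)"
      then have "0 / 2 + 1 \<le> (0::real)" by (rule nonpos_Ints_nonpos)
      then show False by simp
    qed
    show ?thesis
      by (rule DERIV_chain2[where f=rGamma and g="\<lambda>x. x / 2 + 1", OF has_field_derivative_rGamma_no_nonpos_int[OF nz1, where A=UNIV]]) (auto intro!: derivative_eq_intros)
  qed 
  have d0: "((\<lambda>x::real. 2 powr (- x)) has_real_derivative (2 powr (- 0) * (- ln 2))) (at 0)"
    by (auto intro!: derivative_eq_intros)
  show ?thesis unfolding phi_def [abs_def]
    by (rule exI, (rule DERIV_cdivide DERIV_mult DERIV_const d0 d1 d2)+)
qed

lemma per_s:
  fixes rho :: "'a::euclidean_space \<Rightarrow> real"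
  assumes p: "1 < p" and mdef: "m = conj_exp p" and M: "0 < M"
    and s: "0 < s" "s < real DIM('a) / p"
    and adm: "rho \<in> admissible m M"
    and mini: "\<forall>\<sigma>::'a \<Rightarrow> real\<in>admissible m M. free_energy m p s p rho \<le> free_energy m p s p \<sigma>"
    and R: "0 < R"
    and Gle: "riesz_const DIM('a) (s/2) * (real DIM('a) * unit_ball_vol (real DIM('a)) * R powr s / s) \<le> 1"
  defines "A \<equiv> (\<integral>x. rho x powr m \<partial>lborel)"
    and "al \<equiv> real DIM('a) * (m - 1)"
    and "be \<equiv> (real DIM('a) - s) * m - real DIM('a)"
    and "H \<equiv> riesz_const DIM('a) (s/2) powr m * (real DIM('a) * unit_ball_vol (real DIM('a))
         * R powr (real DIM('a) + (s - real DIM('a)) * m) / (- (real DIM('a) + (s - real DIM('a)) * m)))"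
  shows "free_energy m p s p rho = ereal (- ((p - 1) * A * s * m / be))"
    and "A powr (1/m) * s \<le> al * M * H powr (1/m)"
    and "0 \<le> A" and "0 < be"
proof -
  let ?N = "DIM('a)"
  have N: "0 < real ?N" by simp
  have m1: "1 < m" using p by (simp add: mdef conj_exp_def field_simps)
  have am: "1 / (m - 1) = p - 1" using p by (simp add: mdef conj_exp_def field_simps)
  have ap: "p / m = p - 1" using p by (simp add: mdef conj_exp_def field_simps)
  have sN: "s * p < real ?N" using s p by (simp add: field_simps)
  have sN': "s < real ?N" using sN p s by (smt (verit) mult_less_cancel_left1)
  have be0: "0 < be"
  proof -
    have "real ?N * (p - 1) < (real ?N - s) * p" using sN by (simp add: algebra_simps)
    then have "real ?N < (real ?N - s) * m" using p by (simp add: mdef conj_exp_def field_simps)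
    then show ?thesis by (simp add: be_def)
  qed
  then show "0 < be" .
  have e: "(s - real ?N) * m < - real ?N" using be0 by (simp add: be_def algebra_simps)
  have c: "0 < riesz_const ?N (s/2)" using riesz_const_pos[OF s(1) sN'] .
  have [measurable]: "rho \<in> borel_measurable borel" and r0: "\<And>x. 0 \<le> rho x"
    and i1: "integrable lborel rho" and i2: "integrable lborel (\<lambda>x. rho x powr m)"
    and e1: "(\<integral>x. rho x \<partial>lborel) = M"
    using adm by (auto simp: admissible_def meas_lborel_iff)
  have mass: "(\<integral>\<^sup>+x. ennreal (rho x) \<partial>lborel) = ennreal M"
    using nn_integral_eq_integral[OF i1] r0 e1 by simp
  have A0: "0 \<le> A" unfolding A_def by (intro integral_nonneg_AE) auto
  then show "0 \<le> A" .
  have Aeq: "(\<integral>\<^sup>+x. ennreal (rho x powr m) \<partial>lborel) = ennreal A"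
    unfolding A_def using nn_integral_eq_integral[OF i2] by simp
  define G where "G = riesz_const ?N (s/2) * (real ?N * unit_ball_vol (real ?N) * R powr s / s)"
  have G0: "0 < G" unfolding G_def using c s R by (intro mult_pos_pos divide_pos_pos) auto
  have H0: "0 < H" unfolding H_def using c R e by (intro mult_pos_pos divide_pos_pos) auto
  define B where "B = (\<integral>\<^sup>+x. enn_powr (riesz_conv s rho x) m \<partial>lborel)"
  define bd where "bd t = t powr (1-m) * G powr m * A + (1-t) powr (1-m) * M powr m * H" for t
  have kb: "B \<le> ennreal (bd t)" if "0 < t" "t < 1" for t
    unfolding B_def bd_def G_def H_def
    by (rule key_bound[OF _ r0 mass M Aeq A0 c s(1) R e that m1]) measurable
  have "B \<noteq> \<infinity>" using kb[of "1/2"] by (auto simp: top_unique)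
  then obtain B0 where B0: "B = ennreal B0" "0 \<le> B0" by (cases B) auto
  have B0le: "B0 \<le> bd t" if "0 < t" "t < 1" for t
  proof -
    have "0 \<le> bd t" unfolding bd_def using that A0 G0 H0 M by (intro add_nonneg_nonneg mult_nonneg_nonneg) auto
    then show ?thesis using kb[OF that] B0 by (simp add: ennreal_le_iff)
  qed
  have Fval: "free_energy m p s p rho = ereal ((p - 1) * (A - B0))"
    unfolding free_energy_def mdef[symmetric] am ap A_def[symmetric] B_def[symmetric] B0(1) using B0(2)
    by (simp add: algebra_simps)
  have Fdil: "free_energy m p s p (dil l rho) = ereal ((p - 1) * (l powr al * A - l powr be * B0))" if l: "0 < l" for l
  proof -
    have "(\<integral>x. dil l rho x powr m \<partial>lborel) = l powr al * A"
      using dil_adm(2)[OF adm l] by (simp add: A_def al_def)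
    moreover have "(\<integral>\<^sup>+x. enn_powr (riesz_conv s (dil l rho) x) m \<partial>lborel) = ennreal (l powr be * B0)"
      using B_dil[of rho l m s] l m1 B0 by (simp add: B_def be_def ennreal_mult'[symmetric])
    ultimately show ?thesis
      unfolding free_energy_def mdef[symmetric] am ap using B0(2) l by (simp add: algebra_simps)
  qed
  have "al * A = be * B0"
  proof (rule pohozaev_real[of "p - 1"])
    show "0 < p - 1" using p by simp
    fix l :: real assume l: "0 < l"
    have "free_energy m p s p rho \<le> free_energy m p s p (dil l rho)"
      using mini dil_adm(1)[OF adm l] by blast
    then show "(p - 1) * (A - B0) \<le> (p - 1) * (l powr al * A - l powr be * B0)"
      unfolding Fval Fdil[OF l] by simp
  qed
  then have B0eq: "B0 = (al / be) * A" using be0 by (simp add: field_simps)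
  have albe: "al - be = s * m" by (simp add: al_def be_def algebra_simps)
  have al_eq: "al = be + s * m" using albe by simp
  have "A - B0 = - (A * s * m / be)" using be0 by (simp add: B0eq al_eq field_simps)
  then show "free_energy m p s p rho = ereal (- ((p - 1) * A * s * m / be))"
    unfolding Fval by simp
  have x1: "1 \<le> al / be" using be0 albe s m1 by (simp add: field_simps)
  have Gle1: "G \<le> 1" using Gle by (simp add: G_def)
  have mk: "A powr (1/m) * ((al / be) powr (1/m) - 1) \<le> (M powr m * H) powr (1/m)"
  proof (rule minkowski_real[OF A0 G0 Gle1 _ m1])
    show "0 < M powr m * H" using M H0 by simp
    show "0 \<le> al / be" using x1 by simp
    fix t :: real assume "0 < t" "t < 1"
    then show "al / be * A \<le> t powr (1 - m) * G powr m * A + (1 - t) powr (1 - m) * (M powr m * H)"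
      using B0le[of t] B0eq by (simp add: bd_def mult.assoc)
  qed
  have rl: "1 + (1 - 1 / (al / be)) / m \<le> (al / be) powr (1/m)"
    using root_lb[OF x1] m1 by simp
  have sm0: "0 < s * m" using s m1 by simp
  have al0: "0 < al" using al_eq be0 sm0 by linarith
  have "1 - 1 / (al / be) = s * m / al" using al0 be0 albe by (simp add: field_simps)
  then have "(1 - 1 / (al / be)) / m = s / al" using m1 by simp
  then have "s / al \<le> (al / be) powr (1/m) - 1" using rl by linarith
  then have "A powr (1/m) * (s / al) \<le> A powr (1/m) * ((al / be) powr (1/m) - 1)"
    by (intro mult_left_mono) auto
  also note mk
  also have "(M powr m * H) powr (1/m) = M * H powr (1/m)"
    using M H0 m1 by (simp add: powr_mult powr_powr)
  finally have "A powr (1/m) * (s / al) \<le> M * H powr (1/m)" .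
  then show "A powr (1/m) * s \<le> al * M * H powr (1/m)"
    using al0 by (simp add: field_simps)
qed

lemma psi_tendsto:
  fixes N m al M R w :: real and ph :: "real \<Rightarrow> real"
  assumes m1: "1 < m" and w0: "0 < w" and R0: "0 < R" and al0: "0 < al"
  and be_def: "be = (\<lambda>s. (N - s) * m - N)" and be0: "be 0 = al"
  and Q_def: "Q = (\<lambda>s. w * R powr (- be s) / be s)"
  and phl: "(ph \<longlongrightarrow> ph 0) (at_right 0)"
  shows "((\<lambda>s. al * M * ph s * Q s powr (1/m)) \<longlongrightarrow> al * M * ph 0 * Q 0 powr (1/m)) (at_right 0)"
proof -
  have bt: "(be \<longlongrightarrow> be 0) (at_right 0)" unfolding be_def by (intro tendsto_intros)
  have Qt: "(Q \<longlongrightarrow> Q 0) (at_right 0)" unfolding Q_def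
    by (intro tendsto_divide tendsto_mult tendsto_const tendsto_powr tendsto_minus bt) (use R0 be0 al0 in auto)
  have Q0: "0 < Q 0" unfolding Q_def using w0 R0 be0 al0 by simp
  have "((\<lambda>s. Q s powr (1/m)) \<longlongrightarrow> Q 0 powr (1/m)) (at_right 0)"
    by (intro tendsto_powr Qt tendsto_const) (use Q0 in auto)
  then show ?thesis by (intro tendsto_mult tendsto_const phl)
qed

theorem mainTheorem20:
  fixes p M m chi :: real and rho :: "real \<Rightarrow> 'a::euclidean_space \<Rightarrow> real"
  assumes "1 < p" and "0 < M"
    and "m = conj_exp p" and "chi = p"
    and "\<forall>s \<in> {0<..<real DIM('a) / p}.
           rho s \<in> admissible m M \<and>
           (\<forall>\<sigma>::'a \<Rightarrow> real \<in> admissible m M. free_energy m chi s p (rho s) \<le> free_energy m chi s p \<sigma>)"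
  shows "((\<lambda>s. free_energy m chi s p (rho s)) \<longlongrightarrow> 0) (at_right 0)
    \<and> ((\<lambda>s. (sobolev_exp DIM('a) s p - conj_exp m) / M * (\<integral>x. rho s x powr m \<partial>lborel))
           \<longlongrightarrow> 0) (at_right 0)"
proof -
  note p = assms(1) and M = assms(2) and mdef = assms(3) and chi = assms(4) and hyp = assms(5)
  let ?N = "DIM('a)"
  define w where "w = real ?N * unit_ball_vol (real ?N)"
  have w0: "0 < w" unfolding w_def by simp
  have m1: "1 < m" using p by (simp add: mdef conj_exp_def field_simps)
  have cm: "conj_exp m = p" using p by (simp add: mdef conj_exp_def field_simps)
  have Np: "0 < real ?N / p" using p by simp
  obtain D where D: "(phi ?N has_real_derivative D) (at 0)" using phi_deriv[OF DIM_positive] by blast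
  define g where "g s = w * phi ?N s" for s
  have gD: "(g has_real_derivative w * D) (at 0)" unfolding g_def[abs_def] by (rule DERIV_cmult[OF D])
  have g0: "g 0 = 1" using phi_zero[of "DIM('a)"] by (simp add: g_def w_def ac_simps)
  define E where "E = \<bar>w * D\<bar> + 1"
  define R where "R = exp (- E)"
  have R0: "0 < R" by (simp add: R_def)
  have "(g has_real_derivative w * D) (at 0 within {0<..})"
    using gD by (rule has_field_derivative_at_within)
  then have "((\<lambda>y. (g y - g 0) / (y - 0)) \<longlongrightarrow> w * D) (at_right 0)"
    by (simp add: has_field_derivative_iff)
  then have ev1: "eventually (\<lambda>s. (g s - g 0) / (s - 0) < w * D + 1) (at_right 0)"
    by (rule order_tendstoD) simp
  have evpos: "eventually (\<lambda>s::real. 0 < s) (at_right 0)" by (simp add: eventually_at_right_less)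
  have evNp: "eventually (\<lambda>s::real. s < real ?N / p) (at_right 0)"
    using eventually_at_right[OF Np] Np by blast
  have evG: "eventually (\<lambda>s. riesz_const ?N (s/2) * (real ?N * unit_ball_vol (real ?N) * R powr s / s) \<le> 1) (at_right 0)"
    using ev1 evpos
  proof eventually_elim
    case (elim s)
    have eq1: "riesz_const ?N (s/2) * (real ?N * unit_ball_vol (real ?N) * R powr s / s) = g s * R powr s"
      using elim by (simp add: riesz_const_phi g_def w_def)
    have eq2: "R powr s = exp (- (E * s))" by (simp add: R_def powr_def)
    have "g s \<le> exp (E * s)"
    proof -
      have "g s - 1 < (w * D + 1) * s" using elim g0 by (simp add: field_simps)
      also have "(w * D + 1) * s \<le> E * s" using elim by (intro mult_right_mono) (auto simp: E_def)
      finally have "g s \<le> 1 + E * s" by simp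
      also have "1 + E * s \<le> exp (E * s)" by (rule exp_ge_add_one_self)
      finally show ?thesis .
    qed
    then have "g s * exp (- (E * s)) \<le> exp (E * s) * exp (- (E * s))"
      by (intro mult_right_mono) auto
    also have "\<dots> = 1" by (simp add: exp_minus)
    finally show ?case using eq1 eq2 by simp
  qed
  define al where "al = real ?N * (m - 1)"
  define be where "be s = (real ?N - s) * m - real ?N" for s
  have be0: "be 0 = al" by (simp add: be_def al_def algebra_simps)
  have al0: "0 < al" using m1 by (simp add: al_def)
  define Q where "Q s = w * R powr (- be s) / be s" for s
  define Psi where "Psi s = al * M * phi ?N s * Q s powr (1/m)" for s
  have ph: "(phi ?N \<longlongrightarrow> phi ?N 0) (at_right 0)"
    using DERIV_isCont[OF D] unfolding isCont_def by (rule tendsto_mono[OF at_le, rotated]) simp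
  have bef: "be = (\<lambda>s. (real ?N - s) * m - real ?N)" by (rule ext) (simp add: be_def)
  have Qf: "Q = (\<lambda>s. w * R powr (- be s) / be s)" by (rule ext) (simp add: Q_def)
  have bt: "(be \<longlongrightarrow> be 0) (at_right 0)" unfolding bef by (intro tendsto_intros)
  have "(Psi \<longlongrightarrow> Psi 0) (at_right 0)"
    unfolding Psi_def by (rule psi_tendsto[OF m1 w0 R0 al0 bef be0 Qf ph])
  then have evPsi: "eventually (\<lambda>s. Psi s < Psi 0 + 1) (at_right 0)"
    by (rule order_tendstoD) simp
  define K where "K = Psi 0 + 1"
  define A where "A s = (\<integral>x. rho s x powr m \<partial>lborel)" for s
  have main: "eventually (\<lambda>s. free_energy m chi s p (rho s) = ereal (- ((p - 1) * A s * s * m / be s))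
      \<and> 0 \<le> A s \<and> A s \<le> K powr m \<and> 0 < be s) (at_right 0)"
    using evpos evNp evG evPsi
  proof eventually_elim
    case (elim s)
    then have sI: "s \<in> {0<..<real ?N / p}" by simp
    have adm: "rho s \<in> admissible m M" and mini: "\<forall>\<sigma>::'a \<Rightarrow> real\<in>admissible m M. free_energy m p s p (rho s) \<le> free_energy m p s p \<sigma>"
      using hyp sI chi by auto
    note ps = per_s[OF p mdef M elim(1) elim(2) adm mini R0 elim(3)]
    have sN: "s * p < real ?N" using elim(2) p by (simp add: field_simps)
    have sN': "s < real ?N" using sN p elim(1) by (smt (verit) mult_less_cancel_left1)
    have c: "0 < riesz_const ?N (s/2)" using riesz_const_pos[OF elim(1) sN'] .
    have bes: "0 < be s" using ps(4) by (simp add: be_def)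
    have Q0: "0 < Q s" unfolding Q_def using w0 R0 bes by simp
    have Heq: "riesz_const ?N (s/2) powr m * (real ?N * unit_ball_vol (real ?N)
         * R powr (real ?N + (s - real ?N) * m) / (- (real ?N + (s - real ?N) * m))) = riesz_const ?N (s/2) powr m * Q s"
      by (simp add: Q_def be_def w_def algebra_simps)
    have "A s powr (1/m) * s \<le> al * M * (riesz_const ?N (s/2) powr m * Q s) powr (1/m)"
      using ps(2) unfolding Heq A_def al_def .
    also have "(riesz_const ?N (s/2) powr m * Q s) powr (1/m) = riesz_const ?N (s/2) * Q s powr (1/m)"
      using c Q0 m1 by (simp add: powr_mult powr_powr)
    also have "riesz_const ?N (s/2) = s * phi ?N s" using riesz_const_phi[OF elim(1)] .
    finally have "A s powr (1/m) * s \<le> s * Psi s" by (simp add: Psi_def ac_simps)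
    then have "A s powr (1/m) \<le> Psi s" using elim(1) by (simp add: mult.commute)
    then have Ak: "A s powr (1/m) \<le> K" using elim(4) by (simp add: K_def)
    have A0: "0 \<le> A s" using ps(3) by (simp add: A_def)
    have "A s = (A s powr (1/m)) powr m" using A0 m1 by (simp add: powr_powr)
    also have "\<dots> \<le> K powr m" using Ak m1 by (intro powr_mono2) auto
    finally have "A s \<le> K powr m" .
    moreover have "free_energy m chi s p (rho s) = ereal (- ((p - 1) * A s * s * m / be s))"
      using ps(1) chi by (simp add: A_def be_def)
    ultimately show ?case using A0 bes by simp
  qed
  have t1: "((\<lambda>s. - ((p - 1) * A s * s * m / be s)) \<longlongrightarrow> 0) (at_right 0)"
  proof (rule Lim_null_comparison)
    show "eventually (\<lambda>s. norm (- ((p - 1) * A s * s * m / be s)) \<le> (p - 1) * K powr m * s * m / be s) (at_right 0)"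
      using main evpos
    proof eventually_elim
      case (elim s)
      have "norm (- ((p - 1) * A s * s * m / be s)) = (p - 1) * A s * s * m / be s"
        using elim p m1 by simp
      also have "\<dots> \<le> (p - 1) * K powr m * s * m / be s"
        using elim p m1 by (intro divide_right_mono mult_right_mono mult_left_mono) auto
      finally show ?case .
    qed
    have "((\<lambda>s. (p - 1) * K powr m * s * m / be s) \<longlongrightarrow> (p - 1) * K powr m * 0 * m / be 0) (at_right 0)"
      using al0 be0 by (intro tendsto_divide tendsto_mult tendsto_const tendsto_ident_at bt) auto
    then show "((\<lambda>s. (p - 1) * K powr m * s * m / be s) \<longlongrightarrow> 0) (at_right 0)" by simp
  qed
  have "((\<lambda>s. ereal (- ((p - 1) * A s * s * m / be s))) \<longlongrightarrow> ereal 0) (at_right 0)"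
    using t1 by (simp add: lim_ereal)
  moreover have "eventually (\<lambda>s. free_energy m chi s p (rho s) = ereal (- ((p - 1) * A s * s * m / be s))) (at_right 0)"
    using main by (rule eventually_mono) simp
  ultimately have "((\<lambda>s. free_energy m chi s p (rho s)) \<longlongrightarrow> ereal 0) (at_right 0)"
    using tendsto_cong by fastforce
  then have F: "((\<lambda>s. free_energy m chi s p (rho s)) \<longlongrightarrow> 0) (at_right 0)"
    by (simp add: zero_ereal_def)
  have D2: "((\<lambda>s. (sobolev_exp DIM('a) s p - conj_exp m) / M * A s) \<longlongrightarrow> 0) (at_right 0)"
  proof (rule Lim_null_comparison)
    show "eventually (\<lambda>s. norm ((sobolev_exp DIM('a) s p - conj_exp m) / M * A s)
        \<le> \<bar>real ?N * p / (real ?N - s * p) - p\<bar> / M * K powr m) (at_right 0)"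
      using main
    proof eventually_elim
      case (elim s)
      have "norm ((sobolev_exp DIM('a) s p - conj_exp m) / M * A s) = \<bar>real ?N * p / (real ?N - s * p) - p\<bar> / M * A s"
        using elim M by (simp add: sobolev_exp_def cm abs_mult)
      also have "\<dots> \<le> \<bar>real ?N * p / (real ?N - s * p) - p\<bar> / M * K powr m"
        using elim M by (intro mult_left_mono) auto
      finally show ?case .
    qed
    have "((\<lambda>s. \<bar>real ?N * p / (real ?N - s * p) - p\<bar> / M * K powr m) \<longlongrightarrow> \<bar>real ?N * p / (real ?N - 0 * p) - p\<bar> / M * K powr m) (at_right 0)"
      using p M by (intro tendsto_mult tendsto_divide tendsto_rabs tendsto_diff tendsto_const tendsto_ident_at) auto
    then show "((\<lambda>s. \<bar>real ?N * p / (real ?N - s * p) - p\<bar> / M * K powr m) \<longlongrightarrow> 0) (at_right 0)"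
      by simp
  qed
  show ?thesis using F D2 by (simp add: A_def)
qed

end
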